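(* Let $X$ be the space of all sequences of the form $c=\sum_{k=1}^N a_k\star b_k$ (finite sums) with $a_k,b_k$ finitely supported sequences, normed by $\|c\|_X=\inf\sum_{k=1}^N\|a_k\|_{\ell^2(\mathbb{N})}\|b_k\|_{\ell^2(\mathbb{N})}$ over all such finite representations, and let $\mathcal{X}$ be its Banach space completion. For $m=M(\alpha)\in\mathcal{M}$ let $Jm(c)=(\alpha,c)$, $c\in X$. Then $Jm$ extends to a bounded linear functional on $\mathcal{X}$ for every $m\in\mathcal{M}$, and $J\colon\mathcal{M}\to\mathcal{X}^*$ is an isometric isomorphism.
   Context: For a sequence $\alpha\colon\mathbb{N}\to\mathbb{C}$, $M(\alpha)$ is defined by $\langle M(\alpha)a,b\rangle_{\ell^2(\mathbb{N})}=\sum_{n,m}a(n)\overline{b(m)}\alpha(nm)$ for finitely supported $a,b$; $\mathcal{M}$ is the space of those $M(\alpha)$ extending to bounded operators on $\ell^2(\mathbb{N})$, with the operator norm. Dirichlet convolution: $(a\star b)(n)=\sum_{k\mid n}a(k)\overline{b(n/k)}$; $(a,b)=\sum_n a(n)b(n)$ is the bilinear pairing. *)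

theory Defs
  imports "HOL-Analysis.Analysis"
begin

text \<open>Sequences on the positive integers are modelled as functions nat => complex;
  the value at 0 is irrelevant (finitely supported sequences vanish at 0).\<close>

definition supp_seq :: "(nat \<Rightarrow> complex) \<Rightarrow> nat set" where
  "supp_seq a = {n. a n \<noteq> 0}"

definition fin_supp :: "(nat \<Rightarrow> complex) \<Rightarrow> bool" where
  "fin_supp a \<longleftrightarrow> finite (supp_seq a) \<and> a 0 = 0"

definition l2norm :: "(nat \<Rightarrow> complex) \<Rightarrow> real" where
  "l2norm a = sqrt (\<Sum>n\<in>supp_seq a. (cmod (a n))^2)"

definition Mform :: "(nat \<Rightarrow> complex) \<Rightarrow> (nat \<Rightarrow> complex) \<Rightarrow> (nat \<Rightarrow> complex) \<Rightarrow> complex" where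
  "Mform \<alpha> a b = (\<Sum>n\<in>supp_seq a. \<Sum>m\<in>supp_seq b. a n * cnj (b m) * \<alpha> (n * m))"

text \<open>M(alpha) extends to a bounded operator on l^2(N).\<close>
definition M_bounded :: "(nat \<Rightarrow> complex) \<Rightarrow> bool" where
  "M_bounded \<alpha> \<longleftrightarrow> (\<exists>C. \<forall>a b. fin_supp a \<longrightarrow> fin_supp b \<longrightarrow>
      cmod (Mform \<alpha> a b) \<le> C * l2norm a * l2norm b)"

definition M_norm :: "(nat \<Rightarrow> complex) \<Rightarrow> real" where
  "M_norm \<alpha> = Sup {cmod (Mform \<alpha> a b) | a b.
      fin_supp a \<and> fin_supp b \<and> l2norm a \<le> 1 \<and> l2norm b \<le> 1}"

definition dconv :: "(nat \<Rightarrow> complex) \<Rightarrow> (nat \<Rightarrow> complex) \<Rightarrow> nat \<Rightarrow> complex" where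
  "dconv a b n = (if n = 0 then 0 else (\<Sum>k | k dvd n. a k * cnj (b (n div k))))"

definition pairing :: "(nat \<Rightarrow> complex) \<Rightarrow> (nat \<Rightarrow> complex) \<Rightarrow> complex" where
  "pairing \<alpha> c = (\<Sum>n\<in>supp_seq c. \<alpha> n * c n)"

definition repr_sum :: "((nat \<Rightarrow> complex) \<times> (nat \<Rightarrow> complex)) list \<Rightarrow> nat \<Rightarrow> complex" where
  "repr_sum ps = (\<lambda>n. \<Sum>p\<leftarrow>ps. dconv (fst p) (snd p) n)"

definition valid_repr :: "((nat \<Rightarrow> complex) \<times> (nat \<Rightarrow> complex)) list \<Rightarrow> bool" where
  "valid_repr ps \<longleftrightarrow> (\<forall>p\<in>set ps. fin_supp (fst p) \<and> fin_supp (snd p))"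

definition Xspace :: "(nat \<Rightarrow> complex) set" where
  "Xspace = {c. \<exists>ps. valid_repr ps \<and> c = repr_sum ps}"

definition Xnorm :: "(nat \<Rightarrow> complex) \<Rightarrow> real" where
  "Xnorm c = Inf {(\<Sum>p\<leftarrow>ps. l2norm (fst p) * l2norm (snd p)) | ps.
      valid_repr ps \<and> c = repr_sum ps}"

text \<open>Linear functionals on X that are bounded w.r.t. the X-norm (= elements of the dual
  of the completion of X), and their dual norm.\<close>
definition linear_on_X :: "((nat \<Rightarrow> complex) \<Rightarrow> complex) \<Rightarrow> bool" where
  "linear_on_X L \<longleftrightarrow> (\<forall>c\<in>Xspace. \<forall>d\<in>Xspace. L (\<lambda>n. c n + d n) = L c + L d) \<and>
     (\<forall>c\<in>Xspace. \<forall>s::complex. L (\<lambda>n. s * c n) = s * L c)"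

definition bounded_on_X :: "((nat \<Rightarrow> complex) \<Rightarrow> complex) \<Rightarrow> bool" where
  "bounded_on_X L \<longleftrightarrow> (\<exists>C. \<forall>c\<in>Xspace. cmod (L c) \<le> C * Xnorm c)"

definition dual_norm_X :: "((nat \<Rightarrow> complex) \<Rightarrow> complex) \<Rightarrow> real" where
  "dual_norm_X L = Sup {cmod (L c) | c. c \<in> Xspace \<and> Xnorm c \<le> 1}"

end

theory Submission
  imports Defs
begin

abbreviation fs :: "(nat \<Rightarrow> complex) \<Rightarrow> bool" where "fs c \<equiv> finite (supp_seq c)"

lemma pairing_superset:
  assumes "finite S" "supp_seq c \<subseteq> S"
  shows "pairing \<alpha> c = (\<Sum>n\<in>S. \<alpha> n * c n)"
  unfolding pairing_def
  by (rule sum.mono_neutral_left) (use assms in \<open>auto simp: supp_seq_def\<close>)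

lemma supp_add: "supp_seq (\<lambda>n. c n + d n) \<subseteq> supp_seq c \<union> supp_seq d"
  by (auto simp: supp_seq_def)

lemma pairing_add:
  assumes "fs c" "fs d"
  shows "pairing \<alpha> (\<lambda>n. c n + d n) = pairing \<alpha> c + pairing \<alpha> d"
proof -
  let ?S = "supp_seq c \<union> supp_seq d"
  have "pairing \<alpha> (\<lambda>n. c n + d n) = (\<Sum>n\<in>?S. \<alpha> n * (c n + d n))"
    by (rule pairing_superset) (use assms supp_add in auto)
  also have "\<dots> = (\<Sum>n\<in>?S. \<alpha> n * c n) + (\<Sum>n\<in>?S. \<alpha> n * d n)"
    by (simp add: distrib_left sum.distrib)
  also have "\<dots> = pairing \<alpha> c + pairing \<alpha> d"
  proof -
    have "pairing \<alpha> c = (\<Sum>n\<in>?S. \<alpha> n * c n)" by (rule pairing_superset) (use assms in auto)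
    moreover have "pairing \<alpha> d = (\<Sum>n\<in>?S. \<alpha> n * d n)" by (rule pairing_superset) (use assms in auto)
    ultimately show ?thesis by simp
  qed
  finally show ?thesis .
qed

lemma pairing_zero: "pairing \<alpha> (\<lambda>n. 0) = 0"
  by (simp add: pairing_def supp_seq_def)

lemma fs_sum: "finite I \<Longrightarrow> (\<forall>i\<in>I. fs (f i)) \<Longrightarrow> fs (\<lambda>n. \<Sum>i\<in>I. f i n)"
proof (induction I rule: finite_induct)
  case empty then show ?case by (simp add: supp_seq_def)
next
  case (insert x F)
  then show ?case using supp_add[of "f x" "\<lambda>n. \<Sum>i\<in>F. f i n"]
    by (auto intro: finite_subset)
qed

lemma pairing_sum: "finite I \<Longrightarrow> (\<forall>i\<in>I. fs (f i)) \<Longrightarrow>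
   pairing \<alpha> (\<lambda>n. \<Sum>i\<in>I. f i n) = (\<Sum>i\<in>I. pairing \<alpha> (f i))"
proof (induction I rule: finite_induct)
  case empty then show ?case by (simp add: pairing_zero)
next
  case (insert x F)
  then show ?case
    using pairing_add[of "f x" "\<lambda>n. \<Sum>i\<in>F. f i n" \<alpha>] fs_sum[of F f] by auto
qed

lemma fs_sum_list: "(\<forall>p\<in>set ps. fs (f p)) \<Longrightarrow> fs (\<lambda>n. \<Sum>p\<leftarrow>ps. f p n)"
proof (induction ps)
  case Nil then show ?case by (simp add: supp_seq_def)
next
  case (Cons x xs)
  then show ?case using supp_add[of "f x" "\<lambda>n. \<Sum>p\<leftarrow>xs. f p n"]
    by (auto intro: finite_subset)
qed

lemma pairing_sum_list: "(\<forall>p\<in>set ps. fs (f p)) \<Longrightarrow>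
   pairing \<alpha> (\<lambda>n. \<Sum>p\<leftarrow>ps. f p n) = (\<Sum>p\<leftarrow>ps. pairing \<alpha> (f p))"
proof (induction ps)
  case Nil then show ?case by (simp add: pairing_zero)
next
  case (Cons x xs)
  then show ?case
    using pairing_add[of "f x" "\<lambda>n. \<Sum>p\<leftarrow>xs. f p n" \<alpha>] fs_sum_list[of xs f] by auto
qed

lemma pairing_ind: "pairing \<alpha> (\<lambda>n. s * (if j = n then 1 else 0)) = s * \<alpha> j"
proof -
  have "pairing \<alpha> (\<lambda>n. s * (if j = n then 1 else 0)) = (\<Sum>n\<in>{j}. \<alpha> n * (s * (if j = n then 1 else 0)))"
    by (rule pairing_superset) (auto simp: supp_seq_def)
  then show ?thesis by simp
qed

lemma fs_ind: "fs (\<lambda>n. s * (if j = n then 1 else 0))"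
  by (rule finite_subset[of _ "{j}"]) (auto simp: supp_seq_def)

lemma dconv_expand:
  assumes "fin_supp a" "fin_supp b"
  shows "dconv a b = (\<lambda>n. \<Sum>k\<in>supp_seq a. \<Sum>m\<in>supp_seq b. a k * cnj (b m) * (if k*m = n then 1 else 0))"
proof
  fix n
  have a0: "a 0 = 0" and b0: "b 0 = 0" and fa: "fs a" and fb: "fs b" using assms by (auto simp: fin_supp_def)
  show "dconv a b n = (\<Sum>k\<in>supp_seq a. \<Sum>m\<in>supp_seq b. a k * cnj (b m) * (if k*m = n then 1 else 0))"
  proof (cases "n = 0")
    case True
    have "\<And>k m. k \<in> supp_seq a \<Longrightarrow> m \<in> supp_seq b \<Longrightarrow> k * m \<noteq> 0"
      using a0 b0 unfolding supp_seq_def by (auto simp: mult_eq_0_iff) (metis gr0I)+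
    then show ?thesis using True a0 b0 by (auto simp: dconv_def supp_seq_def intro!: sum.neutral)
  next
    case False
    have inner: "(\<Sum>m\<in>supp_seq b. a k * cnj (b m) * (if k*m = n then 1 else 0))
        = (if k dvd n then a k * cnj (b (n div k)) else 0)" if k: "k \<in> supp_seq a" for k
    proof -
      have kp: "k > 0" using k a0 by (auto simp: supp_seq_def intro: Nat.gr0I)
      have eq: "(k*m = n) = (k dvd n \<and> m = n div k)" for m
        using kp by auto
      have "(\<Sum>m\<in>supp_seq b. a k * cnj (b m) * (if k*m = n then 1 else 0))
          = (\<Sum>m\<in>supp_seq b. if m = n div k then (if k dvd n then a k * cnj (b m) else 0) else 0)"
        by (rule sum.cong) (auto simp: eq)
      also have "\<dots> = (if n div k \<in> supp_seq b then (if k dvd n then a k * cnj (b (n div k)) else 0) else 0)"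
        using fb by (simp add: sum.delta')
      also have "\<dots> = (if k dvd n then a k * cnj (b (n div k)) else 0)"
        by (auto simp: supp_seq_def)
      finally show ?thesis .
    qed
    have "(\<Sum>k\<in>supp_seq a. \<Sum>m\<in>supp_seq b. a k * cnj (b m) * (if k*m = n then 1 else 0))
        = (\<Sum>k\<in>supp_seq a. if k dvd n then a k * cnj (b (n div k)) else 0)"
      by (rule sum.cong) (auto simp: inner)
    also have "\<dots> = (\<Sum>k\<in>{k\<in>supp_seq a. k dvd n}. a k * cnj (b (n div k)))"
      using fa by (simp add: sum.inter_filter)
    also have "\<dots> = (\<Sum>k | k dvd n. a k * cnj (b (n div k)))"
      by (rule sum.mono_neutral_left) (use False in \<open>auto simp: supp_seq_def finite_divisors_nat\<close>)
    also have "\<dots> = dconv a b n" using False by (simp add: dconv_def)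
    finally show ?thesis by simp
  qed
qed

lemma dconv_pairing:
  assumes "fin_supp a" "fin_supp b"
  shows "pairing \<alpha> (dconv a b) = Mform \<alpha> a b"
proof -
  have fa: "fs a" and fb: "fs b" using assms by (auto simp: fin_supp_def)
  have "pairing \<alpha> (dconv a b) = (\<Sum>k\<in>supp_seq a. pairing \<alpha> (\<lambda>n. \<Sum>m\<in>supp_seq b. a k * cnj (b m) * (if k*m = n then 1 else 0)))"
    unfolding dconv_expand[OF assms]
    by (rule pairing_sum) (use fa fb in \<open>auto intro!: fs_sum fs_ind\<close>)
  also have "\<dots> = (\<Sum>k\<in>supp_seq a. \<Sum>m\<in>supp_seq b. pairing \<alpha> (\<lambda>n. a k * cnj (b m) * (if k*m = n then 1 else 0)))"
    by (rule sum.cong[OF refl], rule pairing_sum) (use fb in \<open>auto intro!: fs_ind\<close>)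
  also have "\<dots> = Mform \<alpha> a b"
    unfolding Mform_def using pairing_ind by (simp add: mult.commute)
  finally show ?thesis .
qed

lemma fin_supp_dconv:
  assumes "fin_supp a" "fin_supp b"
  shows "fs (dconv a b)"
  unfolding dconv_expand[OF assms] using assms
  by (auto simp: fin_supp_def intro!: fs_sum fs_ind)


definition cost :: "((nat \<Rightarrow> complex) \<times> (nat \<Rightarrow> complex)) list \<Rightarrow> real" where
  "cost ps = (\<Sum>p\<leftarrow>ps. l2norm (fst p) * l2norm (snd p))"

lemma l2norm_nonneg: "l2norm a \<ge> 0"
  unfolding l2norm_def by (simp add: sum_nonneg)

lemma cost_nonneg: "cost ps \<ge> 0"
  unfolding cost_def by (rule sum_list_nonneg) (auto simp: l2norm_nonneg)

lemma supp_scale: "s \<noteq> 0 \<Longrightarrow> supp_seq (\<lambda>n. s * a n) = supp_seq a"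
  by (auto simp: supp_seq_def)

lemma fin_supp_scale: "fin_supp a \<Longrightarrow> fin_supp (\<lambda>n. s * a n)"
  unfolding fin_supp_def by (auto intro: finite_subset[of _ "supp_seq a"] simp: supp_seq_def)

lemma l2norm_scale: "l2norm (\<lambda>n. s * a n) = cmod s * l2norm a"
proof (cases "s = 0")
  case True then show ?thesis by (simp add: l2norm_def supp_seq_def)
next
  case False
  have "l2norm (\<lambda>n. s * a n) = sqrt ((cmod s)^2 * (\<Sum>n\<in>supp_seq a. (cmod (a n))^2))"
    unfolding l2norm_def supp_scale[OF False]
    by (simp add: norm_mult power_mult_distrib sum_distrib_left)
  also have "\<dots> = cmod s * l2norm a" by (simp add: real_sqrt_mult l2norm_def)
  finally show ?thesis .
qed

lemma l2norm_zero:
  assumes "fs a" "l2norm a = 0" shows "supp_seq a = {}"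
proof -
  have "(\<Sum>n\<in>supp_seq a. (cmod (a n))^2) = 0" using assms(2) by (simp add: l2norm_def)
  then have "\<forall>n\<in>supp_seq a. (cmod (a n))^2 = 0" using assms(1) by (simp add: sum_nonneg_eq_0_iff)
  then show ?thesis by (auto simp: supp_seq_def)
qed

lemma Mform_scale:
  assumes "s \<noteq> 0" "t \<noteq> 0"
  shows "Mform \<alpha> (\<lambda>n. s * a n) (\<lambda>n. t * b n) = s * cnj t * Mform \<alpha> a b"
  unfolding Mform_def supp_scale[OF assms(1)] supp_scale[OF assms(2)]
  by (simp add: sum_distrib_left mult_ac)

lemma Mform_empty: "supp_seq a = {} \<Longrightarrow> Mform \<alpha> a b = 0"
  by (simp add: Mform_def)
lemma Mform_empty2: "supp_seq b = {} \<Longrightarrow> Mform \<alpha> a b = 0"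
  by (simp add: Mform_def)

lemma repr_sum_Nil: "repr_sum [] = (\<lambda>n. 0)" by (simp add: repr_sum_def)

lemma repr_sum_append: "repr_sum (ps @ qs) = (\<lambda>n. repr_sum ps n + repr_sum qs n)"
  by (simp add: repr_sum_def)

lemma dconv_scale: "dconv (\<lambda>n. s * a n) b = (\<lambda>n. s * dconv a b n)"
  by (auto simp: dconv_def sum_distrib_left mult_ac)

lemma repr_sum_scale: "repr_sum (map (\<lambda>p. (\<lambda>n. s * fst p n, snd p)) ps) = (\<lambda>n. s * repr_sum ps n)"
  by (simp add: repr_sum_def dconv_scale o_def sum_list_const_mult)

lemma zero_X: "(\<lambda>n. 0) \<in> Xspace"
  unfolding Xspace_def by (rule CollectI, rule exI[of _ "[]"]) (simp add: valid_repr_def repr_sum_Nil)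

lemma add_X: "c \<in> Xspace \<Longrightarrow> d \<in> Xspace \<Longrightarrow> (\<lambda>n. c n + d n) \<in> Xspace"
  unfolding Xspace_def
  apply clarify
  subgoal for ps qs
    by (rule exI[of _ "ps @ qs"]) (auto simp: valid_repr_def repr_sum_append)
  done

lemma scale_X: "c \<in> Xspace \<Longrightarrow> (\<lambda>n. s * c n) \<in> Xspace"
  unfolding Xspace_def
  apply clarify
  subgoal for ps
    by (rule exI[of _ "map (\<lambda>p. (\<lambda>n. s * fst p n, snd p)) ps"])
       (auto simp: valid_repr_def repr_sum_scale fin_supp_scale)
  done

lemma repr_single: "repr_sum [(a, b)] = dconv a b"
  by (simp add: repr_sum_def)

lemma dconv_X: "fin_supp a \<Longrightarrow> fin_supp b \<Longrightarrow> dconv a b \<in> Xspace"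
  unfolding Xspace_def
  by (rule CollectI, rule exI[of _ "[(a,b)]"]) (simp add: valid_repr_def repr_single)

lemma X_fs: assumes "c \<in> Xspace" shows "fs c" "c 0 = 0"
proof -
  obtain ps where v: "valid_repr ps" and c: "c = repr_sum ps" using assms by (auto simp: Xspace_def)
  show "fs c" unfolding c repr_sum_def
    by (rule fs_sum_list) (use v in \<open>auto simp: valid_repr_def intro: fin_supp_dconv\<close>)
  show "c 0 = 0" unfolding c repr_sum_def by (simp add: dconv_def)
qed

lemma pairing_repr:
  assumes "valid_repr ps"
  shows "pairing \<alpha> (repr_sum ps) = (\<Sum>p\<leftarrow>ps. Mform \<alpha> (fst p) (snd p))"
proof -
  have "pairing \<alpha> (repr_sum ps) = (\<Sum>p\<leftarrow>ps. pairing \<alpha> (dconv (fst p) (snd p)))"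
    unfolding repr_sum_def
    by (rule pairing_sum_list) (use assms in \<open>auto simp: valid_repr_def intro: fin_supp_dconv\<close>)
  also have "\<dots> = (\<Sum>p\<leftarrow>ps. Mform \<alpha> (fst p) (snd p))"
    by (rule arg_cong[where f=sum_list], rule map_cong)
       (use assms in \<open>auto simp: valid_repr_def dconv_pairing\<close>)
  finally show ?thesis .
qed

lemma Xnorm_le: "valid_repr ps \<Longrightarrow> Xnorm (repr_sum ps) \<le> cost ps"
  unfolding Xnorm_def cost_def[symmetric]
  by (rule cInf_lower) (auto intro: bdd_belowI[of _ 0] cost_nonneg)

lemma Xnorm_dconv: "fin_supp a \<Longrightarrow> fin_supp b \<Longrightarrow> Xnorm (dconv a b) \<le> l2norm a * l2norm b"
  using Xnorm_le[of "[(a,b)]"] by (simp add: valid_repr_def repr_single cost_def)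

lemma Xnorm_ge:
  assumes "c \<in> Xspace" "C \<ge> 0" "\<And>ps. valid_repr ps \<Longrightarrow> c = repr_sum ps \<Longrightarrow> x \<le> C * cost ps"
  shows "x \<le> C * Xnorm c"
proof -
  obtain ps0 where v: "valid_repr ps0" and c: "c = repr_sum ps0" using assms by (auto simp: Xspace_def)
  show ?thesis
  proof (cases "C = 0")
    case True then show ?thesis using assms(3)[OF v c] by simp
  next
    case False
    then have Cp: "C > 0" using assms(2) by simp
    have "x / C \<le> Xnorm c"
      unfolding Xnorm_def cost_def[symmetric]
      by (rule cInf_greatest) (use v c assms(3) Cp in \<open>auto simp: pos_divide_le_eq mult.commute\<close>)
    then show ?thesis using Cp by (simp add: pos_divide_le_eq mult.commute)
  qed
qed

lemma Xnorm_nonneg: "c \<in> Xspace \<Longrightarrow> Xnorm c \<ge> 0"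
  using Xnorm_ge[of c 1 0] cost_nonneg by simp


lemma fin_supp_zero: "fin_supp (\<lambda>n. 0)" and l2norm_0: "l2norm (\<lambda>n. 0) = 0"
  by (auto simp: fin_supp_def supp_seq_def l2norm_def)

lemma M_bdd:
  assumes "M_bounded \<alpha>"
  shows "bdd_above {cmod (Mform \<alpha> a b) | a b.
      fin_supp a \<and> fin_supp b \<and> l2norm a \<le> 1 \<and> l2norm b \<le> 1}"
proof -
  obtain C where C: "\<And>a b. fin_supp a \<Longrightarrow> fin_supp b \<Longrightarrow> cmod (Mform \<alpha> a b) \<le> C * l2norm a * l2norm b"
    using assms by (auto simp: M_bounded_def)
  show ?thesis
  proof (rule bdd_aboveI[of _ "max C 0"], clarify)
    fix a b assume h: "fin_supp a" "fin_supp b" "l2norm a \<le> 1" "l2norm b \<le> 1"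
    have "cmod (Mform \<alpha> a b) \<le> C * l2norm a * l2norm b" using C h by simp
    also have "\<dots> \<le> max C 0 * l2norm a * l2norm b"
      by (intro mult_right_mono) (auto simp: l2norm_nonneg)
    also have "\<dots> \<le> max C 0 * 1 * 1"
      by (intro mult_mono) (use h in \<open>auto simp: l2norm_nonneg\<close>)
    finally show "cmod (Mform \<alpha> a b) \<le> max C 0" by simp
  qed
qed

lemma M_norm_upper:
  assumes "M_bounded \<alpha>" "fin_supp a" "fin_supp b" "l2norm a \<le> 1" "l2norm b \<le> 1"
  shows "cmod (Mform \<alpha> a b) \<le> M_norm \<alpha>"
  unfolding M_norm_def by (rule cSup_upper) (use assms M_bdd in auto)

lemma M_norm_nonneg: "M_bounded \<alpha> \<Longrightarrow> M_norm \<alpha> \<ge> 0"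
  using M_norm_upper[of \<alpha> "\<lambda>n. 0" "\<lambda>n. 0"] by (simp add: fin_supp_zero l2norm_0 Mform_def supp_seq_def)

lemma Mform_le_Mnorm:
  assumes "M_bounded \<alpha>" "fin_supp a" "fin_supp b"
  shows "cmod (Mform \<alpha> a b) \<le> M_norm \<alpha> * l2norm a * l2norm b"
proof (cases "l2norm a = 0 \<or> l2norm b = 0")
  case True
  then have "Mform \<alpha> a b = 0"
    using assms l2norm_zero Mform_empty Mform_empty2 by (auto simp: fin_supp_def)
  then show ?thesis using True by auto
next
  case False
  define ra where "ra = l2norm a"
  define rb where "rb = l2norm b"
  have ra: "ra > 0" and rb: "rb > 0" using False l2norm_nonneg ra_def rb_def by (auto simp: le_less)
  define a' where "a' = (\<lambda>n. complex_of_real (1/ra) * a n)"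
  define b' where "b' = (\<lambda>n. complex_of_real (1/rb) * b n)"
  have "l2norm a' = 1" unfolding a'_def l2norm_scale using ra ra_def by (simp add: norm_divide)
  moreover have "l2norm b' = 1" unfolding b'_def l2norm_scale using rb rb_def by (simp add: norm_divide)
  moreover have "fin_supp a'" "fin_supp b'" unfolding a'_def b'_def using assms by (auto intro!: fin_supp_scale simp del: of_real_divide)
  ultimately have le: "cmod (Mform \<alpha> a' b') \<le> M_norm \<alpha>" using M_norm_upper assms by simp
  have "Mform \<alpha> a' b' = complex_of_real (1/ra) * cnj (complex_of_real (1/rb)) * Mform \<alpha> a b"
    unfolding a'_def b'_def by (rule Mform_scale) (use ra rb in auto)
  then have "cmod (Mform \<alpha> a' b') = cmod (Mform \<alpha> a b) / (ra * rb)"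
    using ra rb by (simp add: norm_mult norm_divide)
  with le have "cmod (Mform \<alpha> a b) \<le> M_norm \<alpha> * (ra * rb)"
    using ra rb by (simp add: pos_divide_le_eq)
  then show ?thesis by (simp add: ra_def rb_def mult.assoc)
qed

lemma sum_Mform_le:
  assumes "M_bounded \<alpha>" "valid_repr ps"
  shows "cmod (\<Sum>p\<leftarrow>ps. Mform \<alpha> (fst p) (snd p)) \<le> M_norm \<alpha> * cost ps"
  using assms(2)
proof (induction ps)
  case Nil then show ?case by (simp add: cost_def)
next
  case (Cons p ps)
  have v: "valid_repr ps" "fin_supp (fst p)" "fin_supp (snd p)" using Cons.prems by (auto simp: valid_repr_def)
  have "cmod (\<Sum>q\<leftarrow>p#ps. Mform \<alpha> (fst q) (snd q)) \<le> cmod (Mform \<alpha> (fst p) (snd p)) + cmod (\<Sum>q\<leftarrow>ps. Mform \<alpha> (fst q) (snd q))"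
    by (simp add: norm_triangle_ineq)
  also have "\<dots> \<le> M_norm \<alpha> * l2norm (fst p) * l2norm (snd p) + M_norm \<alpha> * cost ps"
    using Mform_le_Mnorm[OF assms(1) v(2,3)] Cons.IH[OF v(1)] by simp
  also have "\<dots> = M_norm \<alpha> * cost (p # ps)" by (simp add: cost_def algebra_simps)
  finally show ?case .
qed

lemma pairing_scale: "fs c \<Longrightarrow> pairing \<alpha> (\<lambda>n. s * c n) = s * pairing \<alpha> c"
proof (cases "s = 0")
  case True then show ?thesis by (simp add: pairing_zero)
next
  case False then show ?thesis
    by (simp add: pairing_def supp_scale sum_distrib_left mult_ac)
qed

lemma pairing_bound:
  assumes "M_bounded \<alpha>" "c \<in> Xspace"
  shows "cmod (pairing \<alpha> c) \<le> M_norm \<alpha> * Xnorm c"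
  by (rule Xnorm_ge) (use assms M_norm_nonneg sum_Mform_le pairing_repr in auto)

lemma part1:
  assumes "M_bounded \<alpha>"
  shows "linear_on_X (pairing \<alpha>) \<and> bounded_on_X (pairing \<alpha>) \<and> dual_norm_X (pairing \<alpha>) = M_norm \<alpha>"
proof (intro conjI)
  show "linear_on_X (pairing \<alpha>)"
    unfolding linear_on_X_def using X_fs pairing_add pairing_scale by auto
  show "bounded_on_X (pairing \<alpha>)"
    unfolding bounded_on_X_def using pairing_bound[OF assms] by blast
  let ?S1 = "{cmod (pairing \<alpha> c) | c. c \<in> Xspace \<and> Xnorm c \<le> 1}"
  let ?S2 = "{cmod (Mform \<alpha> a b) | a b. fin_supp a \<and> fin_supp b \<and> l2norm a \<le> 1 \<and> l2norm b \<le> 1}"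
  have up1: "x \<le> M_norm \<alpha>" if xS: "x \<in> ?S1" for x
  proof -
    obtain c where c: "c \<in> Xspace" "Xnorm c \<le> 1" "x = cmod (pairing \<alpha> c)" using xS by auto
    have "x \<le> M_norm \<alpha> * Xnorm c" using pairing_bound[OF assms c(1)] c by simp
    also have "\<dots> \<le> M_norm \<alpha> * 1"
      by (rule mult_left_mono) (use c M_norm_nonneg[OF assms] in auto)
    finally show ?thesis by simp
  qed
  have bdd1: "bdd_above ?S1" by (rule bdd_aboveI[of _ "M_norm \<alpha>"]) (rule up1)
  have ne1: "?S1 \<noteq> {}"
  proof -
    have "Xnorm (\<lambda>n. 0) \<le> 0" using Xnorm_le[of "[]"] by (simp add: valid_repr_def repr_sum_Nil cost_def)
    then show ?thesis using zero_X by auto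
  qed
  have ne2: "?S2 \<noteq> {}" using fin_supp_zero l2norm_0 by fastforce
  have le1: "dual_norm_X (pairing \<alpha>) \<le> M_norm \<alpha>"
    unfolding dual_norm_X_def by (rule cSup_least[OF ne1]) (use up1 in blast)
  have le2: "M_norm \<alpha> \<le> dual_norm_X (pairing \<alpha>)"
    unfolding M_norm_def
  proof (rule cSup_least[OF ne2], clarify)
    fix a b assume h: "fin_supp a" "fin_supp b" "l2norm a \<le> 1" "l2norm b \<le> 1"
    have "Xnorm (dconv a b) \<le> l2norm a * l2norm b" using Xnorm_dconv h by simp
    also have "\<dots> \<le> 1 * 1" by (intro mult_mono) (use h in \<open>auto simp: l2norm_nonneg\<close>)
    finally have "cmod (pairing \<alpha> (dconv a b)) \<in> ?S1" using dconv_X[OF h(1,2)] by auto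
    then have "cmod (pairing \<alpha> (dconv a b)) \<le> dual_norm_X (pairing \<alpha>)"
      unfolding dual_norm_X_def by (intro cSup_upper bdd1)
    then show "cmod (Mform \<alpha> a b) \<le> dual_norm_X (pairing \<alpha>)" using dconv_pairing h by simp
  qed
  show "dual_norm_X (pairing \<alpha>) = M_norm \<alpha>" using le1 le2 by simp
qed


definition dlt :: "nat \<Rightarrow> nat \<Rightarrow> complex" where "dlt j = (\<lambda>n. if n = j then 1 else 0)"

lemma supp_dlt: "supp_seq (dlt j) = {j}" by (auto simp: supp_seq_def dlt_def)

lemma fin_supp_dlt: "j > 0 \<Longrightarrow> fin_supp (dlt j)"
  unfolding fin_supp_def supp_dlt by (simp add: dlt_def)

lemma dlt_X: assumes "j > 0" shows "dlt j \<in> Xspace"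
proof -
  have "dconv (dlt j) (dlt 1) = dlt j"
    unfolding dconv_expand[OF fin_supp_dlt[OF assms] fin_supp_dlt[OF zero_less_one]] supp_dlt
    by (auto simp: dlt_def)
  then show ?thesis using dconv_X[OF fin_supp_dlt[OF assms] fin_supp_dlt[OF zero_less_one]] by simp
qed

lemma L_zero: "linear_on_X L \<Longrightarrow> L (\<lambda>n. 0) = 0"
  unfolding linear_on_X_def using zero_X by fastforce

lemma L_finsum:
  assumes L: "linear_on_X L"
  shows "finite F \<Longrightarrow> F \<subseteq> {0<..} \<Longrightarrow> (\<lambda>x. \<Sum>n\<in>F. w n * dlt n x) \<in> Xspace \<and>
     L (\<lambda>x. \<Sum>n\<in>F. w n * dlt n x) = (\<Sum>n\<in>F. w n * L (dlt n))"
proof (induction F rule: finite_induct)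
  case empty then show ?case using zero_X L_zero[OF L] by simp
next
  case (insert j F)
  have IH: "(\<lambda>x. \<Sum>n\<in>F. w n * dlt n x) \<in> Xspace" "L (\<lambda>x. \<Sum>n\<in>F. w n * dlt n x) = (\<Sum>n\<in>F. w n * L (dlt n))"
    using insert by auto
  have dj: "(\<lambda>x. w j * dlt j x) \<in> Xspace" using scale_X dlt_X insert.prems by auto
  have eq: "(\<lambda>x. \<Sum>n\<in>insert j F. w n * dlt n x) = (\<lambda>x. w j * dlt j x + (\<Sum>n\<in>F. w n * dlt n x))"
    using insert by simp
  have "L (\<lambda>x. w j * dlt j x + (\<Sum>n\<in>F. w n * dlt n x)) = L (\<lambda>x. w j * dlt j x) + L (\<lambda>x. \<Sum>n\<in>F. w n * dlt n x)"
  proof -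
    have add: "\<forall>c\<in>Xspace. \<forall>d\<in>Xspace. L (\<lambda>n. c n + d n) = L c + L d" using L linear_on_X_def by blast
    show ?thesis using add[rule_format, OF dj IH(1)] by simp
  qed
  also have "L (\<lambda>x. w j * dlt j x) = w j * L (dlt j)"
  proof -
    have sc: "\<forall>c\<in>Xspace. \<forall>s. L (\<lambda>n. s * c n) = s * L c" using L linear_on_X_def by blast
    have "j > 0" using insert.prems by auto
    then show ?thesis using sc[rule_format, OF dlt_X] by simp
  qed
  finally show ?case unfolding eq using IH add_X[OF dj IH(1)] insert by simp
qed

lemma X_expand:
  assumes "c \<in> Xspace"
  shows "c = (\<lambda>x. \<Sum>n\<in>supp_seq c. c n * dlt n x)"
proof
  fix x
  have "(\<Sum>n\<in>supp_seq c. c n * dlt n x) = (\<Sum>n\<in>supp_seq c. if n = x then c n else 0)"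
    by (rule sum.cong) (auto simp: dlt_def)
  also have "\<dots> = c x" using X_fs[OF assms] by (auto simp: sum.delta' supp_seq_def)
  finally show "c x = (\<Sum>n\<in>supp_seq c. c n * dlt n x)" by simp
qed

lemma part2:
  assumes L: "linear_on_X L" and B: "bounded_on_X L"
  shows "\<exists>\<alpha>. M_bounded \<alpha> \<and> (\<forall>c\<in>Xspace. L c = pairing \<alpha> c)"
proof (intro exI conjI ballI)
  define \<alpha> where "\<alpha> = (\<lambda>n. L (dlt n))"
  show rep: "L c = pairing \<alpha> c" if c: "c \<in> Xspace" for c
  proof -
    have sub: "supp_seq c \<subseteq> {0<..}" using X_fs[OF c] by (auto simp: supp_seq_def intro: gr0I)
    have "L c = L (\<lambda>x. \<Sum>n\<in>supp_seq c. c n * dlt n x)" using X_expand[OF c] by simp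
    also have "\<dots> = (\<Sum>n\<in>supp_seq c. c n * L (dlt n))" using L_finsum[OF L X_fs(1)[OF c] sub] by simp
    also have "\<dots> = pairing \<alpha> c" by (simp add: pairing_def \<alpha>_def mult.commute)
    finally show ?thesis .
  qed
  obtain C where C: "\<And>c. c \<in> Xspace \<Longrightarrow> cmod (L c) \<le> C * Xnorm c" using B by (auto simp: bounded_on_X_def)
  show "M_bounded \<alpha>"
    unfolding M_bounded_def
  proof (intro exI allI impI)
    fix a b assume a: "fin_supp a" and b: "fin_supp b"
    have dX: "dconv a b \<in> Xspace" using dconv_X a b by simp
    have "cmod (Mform \<alpha> a b) = cmod (L (dconv a b))" using rep[OF dX] dconv_pairing[OF a b] by simp
    also have "\<dots> \<le> C * Xnorm (dconv a b)" using C dX by simp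
    also have "\<dots> \<le> max C 0 * Xnorm (dconv a b)"
      by (rule mult_right_mono) (auto simp: Xnorm_nonneg dX)
    also have "\<dots> \<le> max C 0 * (l2norm a * l2norm b)"
      by (rule mult_left_mono) (auto simp: Xnorm_dconv a b)
    finally show "cmod (Mform \<alpha> a b) \<le> max C 0 * l2norm a * l2norm b" by (simp add: mult.assoc)
  qed
qed

theorem lemma7:
  shows "(\<forall>\<alpha>. M_bounded \<alpha> \<longrightarrow>
            linear_on_X (pairing \<alpha>) \<and> bounded_on_X (pairing \<alpha>) \<and>
            dual_norm_X (pairing \<alpha>) = M_norm \<alpha>)
       \<and> (\<forall>L. linear_on_X L \<and> bounded_on_X L \<longrightarrow>
            (\<exists>\<alpha>. M_bounded \<alpha> \<and> (\<forall>c\<in>Xspace. L c = pairing \<alpha> c)))"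
  using part1 part2 by blast

end
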